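(* Let $V$ be a finite set, $E\subseteq V\times V$ a reflexive symmetric relation, $\mathcal{S}$ the collection of connected subsets of $V$ (as defined in the context), $\mu$ an additive measure on $2^V$ with $\mu(S)=0$ only for $S=\emptyset$, and $S^*\in\mathcal{S}\cup\{\emptyset\}$. Let $P_0$ be a valid partition of $V$. Then there exists a valid partition coarser than $P_0$ under which the percentile of $S^*$ is strictly less than (respectively, strictly greater than) the percentile of $S^*$ under $P_0$ if and only if there exist $l$ large, $m$ medium and $s$ small blocks of $P_0$ (blocks other than $S^*$), with $l+m+s\ge 2$, whose union lies in $\mathcal{S}$ and such that $$\frac{l+0.5m-1}{l+m+s-1}$$ is strictly greater than (respectively, strictly less than) the percentile of $S^*$ under $P_0$.
   Context: $G=(V,E)$ is viewed as a simple undirected graph. $\mathcal{S}$ is the set of nonempty $S\subseteq V$ that are connected: for every partition $S=A\sqcup B$ with $A,B\neq\emptyset$ there exist $a\in A$, $b\in B$ with $(a,b)\in E$. $\mu:2^V\to[0,\infty)$ satisfies $\mu(S)=\sum_{s\in S}\mu(\{s\})$. A valid partition is a partition $(S_1,\dots,S_c,S^* )$ of $V$ with $S_1,\dots,S_c\in\mathcal{S}$. The percentile of $S^*$ under it is $\frac{|\{i:\mu(S_i)>\mu(S^* )\}|+0.5|\{i:\mu(S_i)=\mu(S^* )\}|+0.5}{c+1}$. A set $S\in\mathcal{S}\setminus\{S^*\}$ is large if $\mu(S)>\mu(S^* )$, medium if $\mu(S)=\mu(S^* )$, small if $\mu(S)<\mu(S^* )$. A valid partition is coarser than $P_0$ if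 it still contains $S^*$ as a block and each of its other blocks is a union of blocks of $P_0$. *)

theory Defs
  imports Main "HOL-Library.Disjoint_Sets" Complex_Main
begin

definition conn_set :: "('a \<times> 'a) set \<Rightarrow> 'a set \<Rightarrow> 'a set \<Rightarrow> bool" where
  "conn_set E V S \<longleftrightarrow> S \<noteq> {} \<and> S \<subseteq> V \<and>
     (\<forall>A B. A \<union> B = S \<and> A \<inter> B = {} \<and> A \<noteq> {} \<and> B \<noteq> {} \<longrightarrow>
        (\<exists>a\<in>A. \<exists>b\<in>B. (a, b) \<in> E))"

text \<open>A valid partition (S_1,...,S_c,S*) of V is represented by the set P = {S_1,...,S_c}
of its blocks other than S*.\<close>
definition valid_partition :: "('a \<times> 'a) set \<Rightarrow> 'a set \<Rightarrow> 'a set \<Rightarrow> 'a set set \<Rightarrow> bool" where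
  "valid_partition E V Sstar P \<longleftrightarrow>
     (\<forall>B\<in>P. conn_set E V B) \<and> disjoint P \<and> \<Union>P \<inter> Sstar = {} \<and> \<Union>P \<union> Sstar = V"

definition percentile :: "('a set \<Rightarrow> real) \<Rightarrow> 'a set \<Rightarrow> 'a set set \<Rightarrow> real" where
  "percentile \<mu> Sstar P =
     (real (card {B\<in>P. \<mu> B > \<mu> Sstar}) + 0.5 * real (card {B\<in>P. \<mu> B = \<mu> Sstar}) + 0.5)
       / (real (card P) + 1)"

definition coarser :: "('a \<times> 'a) set \<Rightarrow> 'a set \<Rightarrow> 'a set \<Rightarrow> 'a set set \<Rightarrow> 'a set set \<Rightarrow> bool" where
  "coarser E V Sstar Q P0 \<longleftrightarrow> valid_partition E V Sstar Q \<and> (\<forall>B\<in>Q. \<exists>T\<subseteq>P0. B = \<Union>T)"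

end

theory Submission
  imports Defs
begin

definition fw :: "real \<Rightarrow> real \<Rightarrow> real" where
  "fw a v = (if a < v then 1 else if v = a then 1/2 else 0)"

lemma fw_bounds: "0 \<le> fw a v" "fw a v \<le> 1"
  by (auto simp: fw_def)

lemma count_eq:
  assumes "finite T"
  shows "real (card {B\<in>T. \<mu> B > a}) + 0.5 * real (card {B\<in>T. \<mu> B = a}) = (\<Sum>B\<in>T. fw a (\<mu> B))"
proof -
  have "(\<Sum>B\<in>T. fw a (\<mu> B)) = (\<Sum>B\<in>T. (if a < \<mu> B then 1 else 0) + (1/2) * (if \<mu> B = a then 1 else 0))"
    by (rule sum.cong) (auto simp: fw_def)
  also have "\<dots> = (\<Sum>B\<in>T. (if a < \<mu> B then 1 else 0)) + (1/2) * (\<Sum>B\<in>T. (if \<mu> B = a then 1 else 0))"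
    by (simp add: sum.distrib sum_distrib_left)
  also have "(\<Sum>B\<in>T. (if a < \<mu> B then 1 else 0)) = real (card {B\<in>T. \<mu> B > a})"
    using assms by (simp add: sum.inter_filter[symmetric])
  also have "(\<Sum>B\<in>T. (if \<mu> B = a then 1 else 0)) = real (card {B\<in>T. \<mu> B = a})"
    using assms by (simp add: sum.inter_filter[symmetric])
  finally show ?thesis by simp
qed

lemma perc_eq:
  assumes "finite P"
  shows "percentile \<mu> S P = ((\<Sum>B\<in>P. fw (\<mu> S) (\<mu> B)) + 1/2) / (real (card P) + 1)"
  unfolding percentile_def using count_eq[OF assms, where \<mu>=\<mu> and a="\<mu> S"] by simp

lemma mu_union:
  assumes add: "\<forall>S. S \<subseteq> V \<longrightarrow> \<mu> S = (\<Sum>s\<in>S. \<mu> {s})"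
    and fin: "finite V" and T: "finite T" "\<Union>T \<subseteq> V" "disjoint T"
  shows "\<mu> (\<Union>T) = (\<Sum>A\<in>T. \<mu> A)"
proof -
  have "\<mu> (\<Union>T) = (\<Sum>s\<in>\<Union>T. \<mu> {s})" using add T by auto
  also have "\<dots> = (\<Sum>A\<in>T. \<Sum>s\<in>A. \<mu> {s})"
  proof (rule sum.Union_disjoint[simplified])
    show "\<forall>A\<in>T. finite A" using T fin by (meson Sup_le_iff finite_subset)
    show "\<forall>A\<in>T. \<forall>B\<in>T. A \<noteq> B \<longrightarrow> A \<inter> B = {}" using T(3)
      by (auto simp: disjoint_def)
  qed
  also have "\<dots> = (\<Sum>A\<in>T. \<mu> A)"
    using add T(2) by (intro sum.cong refl) (metis Sup_le_iff)
  finally show ?thesis .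
qed

lemma wf_lemma:
  assumes add: "\<forall>S. S \<subseteq> V \<longrightarrow> \<mu> S = (\<Sum>s\<in>S. \<mu> {s})"
    and pos: "\<forall>S. S \<subseteq> V \<longrightarrow> \<mu> S \<ge> 0"
    and nz: "\<forall>S. S \<subseteq> V \<longrightarrow> \<mu> S = 0 \<longrightarrow> S = {}"
    and fin: "finite V" and T: "finite T" "\<Union>T \<subseteq> V" "disjoint T" "\<forall>A\<in>T. A \<noteq> {}"
    and c2: "card T \<ge> 2"
  shows "(\<Sum>B\<in>T. fw a (\<mu> B)) = 0 \<or> fw a (\<mu> (\<Union>T)) = 1"
proof (cases "(\<Sum>B\<in>T. fw a (\<mu> B)) = 0")
  case True then show ?thesis by simp
next
  case False
  then obtain A where A: "A \<in> T" "fw a (\<mu> A) \<noteq> 0"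
    by (meson sum.neutral)
  then have aA: "a \<le> \<mu> A" by (auto simp: fw_def split: if_splits)
  have "T - {A} \<noteq> {}"
  proof
    assume "T - {A} = {}"
    then have "T \<subseteq> {A}" by auto
    then have "card T \<le> 1" by (metis card.empty card.insert card_mono empty_iff finite.intros(1) finite_insert le_numeral_extra(4) One_nat_def)
    with c2 show False by simp
  qed
  then obtain A' where A': "A' \<in> T" "A' \<noteq> A" by auto
  have sub: "\<And>X. X \<in> T \<Longrightarrow> X \<subseteq> V" using T(2) by auto
  have "\<mu> A' \<noteq> 0" using nz sub[OF A'(1)] T(4) A'(1) by auto
  moreover have "\<mu> A' \<ge> 0" using pos sub[OF A'(1)] by auto
  ultimately have pA': "\<mu> A' > 0" by simp
  have eqU: "\<mu> (\<Union>T) = (\<Sum>X\<in>T. \<mu> X)" using mu_union[OF add fin T(1-3)] .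
  have "(\<Sum>X\<in>{A, A'}. \<mu> X) \<le> (\<Sum>X\<in>T. \<mu> X)"
    by (rule sum_mono2) (use T(1) A(1) A'(1) pos sub in auto)
  then have "\<mu> A + \<mu> A' \<le> \<mu> (\<Union>T)" using A'(2) eqU by simp
  with pA' aA have "a < \<mu> (\<Union>T)" by simp
  then show ?thesis by (simp add: fw_def)
qed

lemma vp_facts:
  assumes fin: "finite V" and vp: "valid_partition E V Sstar P"
  shows "finite P" "\<And>A. A \<in> P \<Longrightarrow> A \<noteq> {} \<and> A \<subseteq> V" "disjoint P"
    "\<Union>P \<inter> Sstar = {}" "\<Union>P \<union> Sstar = V"
proof -
  have "P \<subseteq> Pow V" using vp by (auto simp: valid_partition_def conn_set_def)
  then show "finite P" using fin by (meson finite_Pow_iff finite_subset)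
  show "\<And>A. A \<in> P \<Longrightarrow> A \<noteq> {} \<and> A \<subseteq> V" using vp by (auto simp: valid_partition_def conn_set_def)
  show "disjoint P" "\<Union>P \<inter> Sstar = {}" "\<Union>P \<union> Sstar = V" using vp by (auto simp: valid_partition_def)
qed

lemma merge_lemma:
  assumes fin: "finite V" and vp: "valid_partition E V Sstar P0"
    and T: "T \<subseteq> P0" "card T \<ge> 2" "conn_set E V (\<Union>T)"
  shows "coarser E V Sstar (insert (\<Union>T) (P0 - T)) P0"
    and "card (insert (\<Union>T) (P0 - T)) = card P0 - card T + 1"
    and "(\<Sum>B\<in>insert (\<Union>T) (P0 - T). g B) = (\<Sum>B\<in>P0. g B) - (\<Sum>B\<in>T. g B) + (g (\<Union>T) :: real)"
proof -
  note F = vp_facts[OF fin vp]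
  have finT: "finite T" using F(1) T(1) finite_subset by blast
  have nin: "\<Union>T \<notin> P0 - T"
  proof
    assume a: "\<Union>T \<in> P0 - T"
    have "\<Union>T \<noteq> {}" using T(3) by (simp add: conn_set_def)
    then obtain x A where x: "x \<in> A" "A \<in> T" by auto
    have "A \<noteq> \<Union>T" using a x by auto
    then have "A \<inter> \<Union>T = {}" using F(3) a x T(1) by (meson DiffD1 disjointD subsetD)
    then show False using x by auto
  qed
  show "card (insert (\<Union>T) (P0 - T)) = card P0 - card T + 1"
    using nin F(1) finT T(1) by (simp add: card_Diff_subset)
  show "(\<Sum>B\<in>insert (\<Union>T) (P0 - T). g B) = (\<Sum>B\<in>P0. g B) - (\<Sum>B\<in>T. g B) + g (\<Union>T)"
    using nin F(1) finT T(1) by (simp add: sum_diff)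
  have conn: "\<forall>B\<in>insert (\<Union>T) (P0 - T). conn_set E V B"
  proof
    fix B assume B: "B \<in> insert (\<Union>T) (P0 - T)"
    show "conn_set E V B"
    proof (cases "B = \<Union>T")
      case True then show ?thesis using T(3) by simp
    next
      case False
      then have "B \<in> P0" using B by blast
      then show ?thesis using vp by (simp add: valid_partition_def)
    qed
  qed
  have disj: "disjoint (insert (\<Union>T) (P0 - T))"
  proof (rule disjointI)
    fix a b assume ab: "a \<in> insert (\<Union>T) (P0 - T)" "b \<in> insert (\<Union>T) (P0 - T)" "a \<noteq> b"
    have aux: "c \<inter> \<Union>T = {}" if "c \<in> P0 - T" for c
    proof -
      have "c \<inter> X = {}" if X: "X \<in> T" for X
      proof -
        have "c \<noteq> X" using \<open>c \<in> P0 - T\<close> X by blast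
        moreover have "c \<in> P0" "X \<in> P0" using \<open>c \<in> P0 - T\<close> X T(1) by auto
        ultimately show ?thesis using disjointD[OF F(3)] by blast
      qed
      then show ?thesis by blast
    qed
    show "a \<inter> b = {}"
    proof (cases "a = \<Union>T")
      case True
      then have "b \<in> P0 - T" using ab by blast
      then show ?thesis using aux True by blast
    next
      case False
      then have a': "a \<in> P0 - T" using ab by blast
      show ?thesis
      proof (cases "b = \<Union>T")
        case True
        then show ?thesis using aux a' by blast
      next
        case False
        then have "b \<in> P0 - T" using ab by blast
        then show ?thesis using a' ab(3) disjointD[OF F(3)] by blast
      qed
    qed
  qed
  have un: "\<Union>(insert (\<Union>T) (P0 - T)) = \<Union>P0" using T(1) by auto
  have unions: "\<forall>B\<in>insert (\<Union>T) (P0 - T). \<exists>T'\<subseteq>P0. B = \<Union>T'"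
  proof
    fix B assume "B \<in> insert (\<Union>T) (P0 - T)"
    then show "\<exists>T'\<subseteq>P0. B = \<Union>T'"
    proof
      assume "B = \<Union>T" then show ?thesis using T(1) by blast
    next
      assume "B \<in> P0 - T" then show ?thesis by (intro exI[of _ "{B}"]) auto
    qed
  qed
  show "coarser E V Sstar (insert (\<Union>T) (P0 - T)) P0"
    unfolding coarser_def valid_partition_def using conn disj un unions F(4,5) by simp
qed

lemma decomp:
  assumes fin: "finite V" and vp: "valid_partition E V Sstar P0"
    and c: "coarser E V Sstar Q P0"
  shows "finite Q"
    and "\<And>B. B \<in> Q \<Longrightarrow> {A\<in>P0. A \<subseteq> B} \<subseteq> P0 \<and> \<Union>{A\<in>P0. A \<subseteq> B} = B \<and> card {A\<in>P0. A \<subseteq> B} \<ge> 1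
          \<and> (card {A\<in>P0. A \<subseteq> B} = 1 \<longrightarrow> {A\<in>P0. A \<subseteq> B} = {B})"
    and "(\<Sum>A\<in>P0. g A) = (\<Sum>B\<in>Q. \<Sum>A\<in>{A\<in>P0. A \<subseteq> B}. g A)"
    and "card P0 = (\<Sum>B\<in>Q. card {A\<in>P0. A \<subseteq> B})"
proof -
  let ?G = "\<lambda>B. {A\<in>P0. A \<subseteq> B}"
  note F = vp_facts[OF fin vp]
  have vq: "valid_partition E V Sstar Q" and un: "\<forall>B\<in>Q. \<exists>T\<subseteq>P0. B = \<Union>T"
    using c by (auto simp: coarser_def)
  note FQ = vp_facts[OF fin vq]
  show "finite Q" by (rule FQ(1))
  have finG: "finite (?G B)" for B using F(1) by simp
  have BU: "\<Union>(?G B) = B" if "B \<in> Q" for B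
  proof -
    have "\<exists>T\<subseteq>P0. B = \<Union>T" using un that by (rule bspec)
    then obtain T where T: "T \<subseteq> P0" "B = \<Union>T" by (elim exE conjE)
    have "T \<subseteq> ?G B"
    proof
      fix X assume X: "X \<in> T"
      have "X \<in> P0" using T(1) X by (rule subsetD)
      moreover have "X \<subseteq> \<Union>T" using X by (rule Union_upper)
      ultimately show "X \<in> ?G B" using T(2) by simp
    qed
    then have "\<Union>T \<subseteq> \<Union>(?G B)" by (rule Union_mono)
    then have "B \<subseteq> \<Union>(?G B)" using T(2) by simp
    moreover have "\<Union>(?G B) \<subseteq> B" by (rule Union_least) simp
    ultimately show ?thesis by blast
  qed
  show "?G B \<subseteq> P0 \<and> \<Union>(?G B) = B \<and> card (?G B) \<ge> 1 \<and> (card (?G B) = 1 \<longrightarrow> ?G B = {B})"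
    if B: "B \<in> Q" for B
  proof -
    have "?G B \<noteq> {}"
    proof
      assume "?G B = {}"
      then have "\<Union>(?G B) = {}" by (simp only: Union_empty)
      with sym[OF BU[OF B]] have "B = {}" by (rule trans)
      with FQ(2)[OF B] show False by blast
    qed
    then have "card (?G B) > 0" using finG[of B] card_gt_0_iff by blast
    then have "card (?G B) \<ge> 1" by simp
    moreover have "card (?G B) = 1 \<longrightarrow> ?G B = {B}"
    proof
      assume "card (?G B) = 1"
      then obtain A where "?G B = {A}" by (meson card_1_singletonE)
      with BU[OF B] show "?G B = {B}" by simp
    qed
    ultimately show ?thesis using BU[OF B] by auto
  qed
  have P0eq: "\<Union>(?G ` Q) = P0"
  proof
    show "\<Union>(?G ` Q) \<subseteq> P0" by auto
    show "P0 \<subseteq> \<Union>(?G ` Q)"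
    proof
      fix A assume A: "A \<in> P0"
      obtain x where x: "x \<in> A" using F(2)[OF A] by auto
      have "x \<in> V - Sstar" using x A F(4,5) by blast
      then have "x \<in> \<Union>Q" using FQ(4,5) by blast
      then obtain B where B: "B \<in> Q" "x \<in> B" by auto
      then obtain A' where A': "A' \<in> ?G B" "x \<in> A'" using BU[OF B(1)] by auto
      have "A' \<in> P0" using A' by simp
      then have "A = A'" using F(3) A x A' by (meson disjoint_iff disjointD)
      then show "A \<in> \<Union>(?G ` Q)" using A' B by auto
    qed
  qed
  have finG': "\<forall>i\<in>Q. finite (?G i)" using finG by blast
  have dj: "\<forall>i\<in>Q. \<forall>j\<in>Q. i \<noteq> j \<longrightarrow> ?G i \<inter> ?G j = {}"
  proof (intro ballI impI)
    fix i j assume ij: "i \<in> Q" "j \<in> Q" "i \<noteq> j"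
    have "i \<inter> j = {}" using FQ(3) ij by (meson disjointD)
    show "?G i \<inter> ?G j = {}"
    proof (rule ccontr)
      assume "?G i \<inter> ?G j \<noteq> {}"
      then obtain X where X: "X \<in> P0" "X \<subseteq> i" "X \<subseteq> j" by blast
      then have "X \<subseteq> i \<inter> j" by blast
      with \<open>i \<inter> j = {}\<close> have "X = {}" by blast
      with F(2)[OF X(1)] show False by blast
    qed
  qed
  show "(\<Sum>A\<in>P0. g A) = (\<Sum>B\<in>Q. \<Sum>A\<in>?G B. g A)"
    using sum.UNION_disjoint[of Q ?G g, OF FQ(1) finG' dj] unfolding P0eq .
  show "card P0 = (\<Sum>B\<in>Q. card (?G B))"
    using card_UN_disjoint[of Q ?G, OF FQ(1) finG' dj] unfolding P0eq .
qed

theorem lemma2p3: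
  fixes V :: "'a set" and E :: "('a \<times> 'a) set" and \<mu> :: "'a set \<Rightarrow> real"
    and Sstar :: "'a set" and P0 :: "'a set set"
  assumes "finite V"
    and "E \<subseteq> V \<times> V" and "refl_on V E" and "sym E"
    and "\<forall>S. S \<subseteq> V \<longrightarrow> \<mu> S = (\<Sum>s\<in>S. \<mu> {s})"
    and "\<forall>S. S \<subseteq> V \<longrightarrow> \<mu> S \<ge> 0"
    and "\<forall>S. S \<subseteq> V \<longrightarrow> \<mu> S = 0 \<longrightarrow> S = {}"
    and "Sstar = {} \<or> conn_set E V Sstar"
    and "valid_partition E V Sstar P0"
  shows "((\<exists>Q. coarser E V Sstar Q P0 \<and> percentile \<mu> Sstar Q < percentile \<mu> Sstar P0) \<longleftrightarrow>
           (\<exists>T\<subseteq>P0. card T \<ge> 2 \<and> conn_set E V (\<Union>T) \<and>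
              (real (card {B\<in>T. \<mu> B > \<mu> Sstar}) + 0.5 * real (card {B\<in>T. \<mu> B = \<mu> Sstar}) - 1)
                / (real (card T) - 1) > percentile \<mu> Sstar P0))
       \<and> ((\<exists>Q. coarser E V Sstar Q P0 \<and> percentile \<mu> Sstar Q > percentile \<mu> Sstar P0) \<longleftrightarrow>
           (\<exists>T\<subseteq>P0. card T \<ge> 2 \<and> conn_set E V (\<Union>T) \<and>
              (real (card {B\<in>T. \<mu> B > \<mu> Sstar}) + 0.5 * real (card {B\<in>T. \<mu> B = \<mu> Sstar}) - 1)
                / (real (card T) - 1) < percentile \<mu> Sstar P0))"
proof -
  note F = vp_facts[OF assms(1) assms(9)]
  define a where "a = \<mu> Sstar"
  define w where "w T = (\<Sum>B\<in>T. fw a (\<mu> B))" for T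
  define p where "p = percentile \<mu> Sstar P0"
  have percQ: "percentile \<mu> Sstar P = (w P + 1/2) / (real (card P) + 1)" if "finite P" for P
    using perc_eq[OF that] by (simp add: w_def a_def)
  have wnn: "w T \<ge> 0" for T unfolding w_def by (simp add: sum_nonneg fw_bounds)
  have pD: "w P0 + 1/2 = p * (real (card P0) + 1)"
    using percQ[OF F(1)] p_def by (simp add: field_simps)
  have ppos: "p > 0" using percQ[OF F(1)] p_def wnn[of P0]
    by (simp add: add_pos_nonneg)
  have form: "(real (card {B\<in>T. \<mu> B > \<mu> Sstar}) + 0.5 * real (card {B\<in>T. \<mu> B = \<mu> Sstar}) - 1)
                / (real (card T) - 1) = (w T - 1) / (real (card T) - 1)" if "finite T" for T
    using count_eq[OF that, where \<mu>=\<mu> and a="\<mu> Sstar"] by (simp add: w_def a_def)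
  have Tfacts: "finite T \<and> \<Union>T \<subseteq> V \<and> disjoint T \<and> (\<forall>A\<in>T. A \<noteq> {})" if "T \<subseteq> P0" for T
    using that F(1,2,3) by (auto intro: finite_subset simp: pairwise_subset)
  have wfT: "w T = 0 \<or> fw a (\<mu> (\<Union>T)) = 1" if "T \<subseteq> P0" "card T \<ge> 2" for T
    using wf_lemma[OF assms(5,6,7,1), of T a] Tfacts[OF that(1)] that(2) by (simp add: w_def)
  have merge: "coarser E V Sstar (insert (\<Union>T) (P0 - T)) P0 \<and>
     percentile \<mu> Sstar (insert (\<Union>T) (P0 - T)) =
       (p * (real (card P0) + 1) - w T + fw a (\<mu> (\<Union>T))) / (real (card P0) - real (card T) + 2)"
    if T: "T \<subseteq> P0" "card T \<ge> 2" "conn_set E V (\<Union>T)" for T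
  proof -
    note M = merge_lemma[OF assms(1,9) T]
    have le: "card T \<le> card P0" using T(1) F(1) by (simp add: card_mono)
    have fin: "finite (insert (\<Union>T) (P0 - T))" using F(1) by simp
    have c: "real (card (insert (\<Union>T) (P0 - T))) = real (card P0) - real (card T) + 1"
      using M(2) le by simp
    have ww: "w (insert (\<Union>T) (P0 - T)) = w P0 - w T + fw a (\<mu> (\<Union>T))"
      unfolding w_def by (rule M(3))
    show ?thesis using M(1) percQ[OF fin] c ww pD
      by (simp add: algebra_simps)
  qed
  have decQ: "\<exists>d e. finite Q \<and> w Q + 1/2 = p * (real (card P0) + 1) - (\<Sum>B\<in>Q. d B)
      \<and> real (card Q) + 1 = real (card P0) + 1 - (\<Sum>B\<in>Q. e B)
      \<and> (\<forall>B\<in>Q. conn_set E V B \<and> {A\<in>P0. A \<subseteq> B} \<subseteq> P0 \<and> \<Union>{A\<in>P0. A \<subseteq> B} = B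
           \<and> d B = w {A\<in>P0. A \<subseteq> B} - fw a (\<mu> B)
           \<and> e B = real (card {A\<in>P0. A \<subseteq> B}) - 1
           \<and> e B \<ge> 0 \<and> (e B = 0 \<longrightarrow> d B = 0))"
    if c: "coarser E V Sstar Q P0" for Q
  proof -
    note D = decomp[OF assms(1,9) c]
    let ?G = "\<lambda>B. {A\<in>P0. A \<subseteq> B}"
    define d where "d B = w (?G B) - fw a (\<mu> B)" for B
    define e where "e B = real (card (?G B)) - 1" for B
    have vq: "valid_partition E V Sstar Q" using c by (simp add: coarser_def)
    have s1: "w P0 = (\<Sum>B\<in>Q. w (?G B))" unfolding w_def by (rule D(3))
    have s2: "real (card P0) = (\<Sum>B\<in>Q. real (card (?G B)))" using D(4) by (simp add: of_nat_sum)
    have h1: "(\<Sum>B\<in>Q. d B) = w P0 - w Q"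
      unfolding d_def s1 by (simp add: sum_subtractf w_def)
    have h2: "(\<Sum>B\<in>Q. e B) = real (card P0) - real (card Q)"
      unfolding e_def s2 by (simp add: sum_subtractf)
    have h3: "\<forall>B\<in>Q. conn_set E V B \<and> ?G B \<subseteq> P0 \<and> \<Union>(?G B) = B
           \<and> d B = w (?G B) - fw a (\<mu> B) \<and> e B = real (card (?G B)) - 1
           \<and> e B \<ge> 0 \<and> (e B = 0 \<longrightarrow> d B = 0)"
    proof
      fix B assume B: "B \<in> Q"
      note DB = D(2)[OF B]
      have "conn_set E V B" using vq B by (simp add: valid_partition_def)
      moreover have "e B = 0 \<longrightarrow> d B = 0"
      proof
        assume "e B = 0"
        then have "card (?G B) = 1" by (simp add: e_def)
        then have "?G B = {B}" using DB by blast
        then show "d B = 0" by (simp add: d_def w_def)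
      qed
      ultimately show "conn_set E V B \<and> ?G B \<subseteq> P0 \<and> \<Union>(?G B) = B
           \<and> d B = w (?G B) - fw a (\<mu> B) \<and> e B = real (card (?G B)) - 1
           \<and> e B \<ge> 0 \<and> (e B = 0 \<longrightarrow> d B = 0)"
        using DB by (simp add: d_def e_def)
    qed
    have h4: "w Q + 1/2 = p * (real (card P0) + 1) - (\<Sum>B\<in>Q. d B)" using h1 pD by simp
    have h5: "real (card Q) + 1 = real (card P0) + 1 - (\<Sum>B\<in>Q. e B)" using h2 by simp
    show ?thesis using D(1) h3 h4 h5 by blast
  qed
  have ineq: "(\<Sum>B\<in>Q. d B) \<le> p * (\<Sum>B\<in>Q. e B)" if "\<forall>B\<in>Q. d B \<le> p * e B" for Q and d e :: "'a set \<Rightarrow> real"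
    using that by (simp add: sum_distrib_left sum_mono)
  have ineq2: "(\<Sum>B\<in>Q. d B) \<ge> p * (\<Sum>B\<in>Q. e B)" if "\<forall>B\<in>Q. d B \<ge> p * e B" for Q and d e :: "'a set \<Rightarrow> real"
    using that by (simp add: sum_distrib_left sum_mono)
  have cardT: "real (card T) - 1 > 0" if "card T \<ge> 2" for T :: "'a set set"
    using that by simp
  have leP0: "real (card T) \<le> real (card P0)" if "T \<subseteq> P0" for T
    using that F(1) by (simp add: card_mono)
  show ?thesis unfolding p_def[symmetric]
  proof (intro conjI iffI)
    assume "\<exists>Q. coarser E V Sstar Q P0 \<and> percentile \<mu> Sstar Q < p"
    then obtain Q where Q: "coarser E V Sstar Q P0" "percentile \<mu> Sstar Q < p" by blast
    obtain d e where DE: "finite Q" "w Q + 1/2 = p * (real (card P0) + 1) - (\<Sum>B\<in>Q. d B)"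
      "real (card Q) + 1 = real (card P0) + 1 - (\<Sum>B\<in>Q. e B)"
      "\<forall>B\<in>Q. conn_set E V B \<and> {A\<in>P0. A \<subseteq> B} \<subseteq> P0 \<and> \<Union>{A\<in>P0. A \<subseteq> B} = B
           \<and> d B = w {A\<in>P0. A \<subseteq> B} - fw a (\<mu> B)
           \<and> e B = real (card {A\<in>P0. A \<subseteq> B}) - 1
           \<and> e B \<ge> 0 \<and> (e B = 0 \<longrightarrow> d B = 0)"
      using decQ[OF Q(1)] by blast
    have pos: "real (card P0) + 1 - (\<Sum>B\<in>Q. e B) > 0" using DE(3) by linarith
    have pq: "percentile \<mu> Sstar Q = (p * (real (card P0) + 1) - (\<Sum>B\<in>Q. d B)) / (real (card P0) + 1 - (\<Sum>B\<in>Q. e B))"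
      using percQ[OF DE(1)] DE(2,3) by simp
    have "\<exists>B\<in>Q. d B > p * e B"
    proof (rule ccontr)
      assume "\<not> ?thesis"
      then have "\<forall>B\<in>Q. d B \<le> p * e B" by (auto simp: not_less)
      then have "(\<Sum>B\<in>Q. d B) \<le> p * (\<Sum>B\<in>Q. e B)" by (rule ineq)
      then have "p * (real (card P0) + 1 - (\<Sum>B\<in>Q. e B)) \<le> p * (real (card P0) + 1) - (\<Sum>B\<in>Q. d B)"
        by (simp add: algebra_simps)
      then have "p \<le> percentile \<mu> Sstar Q" using pq pos by (simp add: pos_le_divide_eq)
      with Q(2) show False by simp
    qed
    then obtain B where B: "B \<in> Q" "d B > p * e B" by blast
    define T where "T = {A\<in>P0. A \<subseteq> B}"
    have BT: "conn_set E V B" "T \<subseteq> P0" "B = \<Union>T" "d B = w T - fw a (\<mu> B)"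
      "e B = real (card T) - 1" "e B \<ge> 0" "e B = 0 \<longrightarrow> d B = 0"
      using DE(4) B(1) unfolding T_def by blast+
    have "e B \<noteq> 0" using BT(7) B(2) by auto
    then have eB: "e B > 0" using BT(6) by simp
    then have c2: "card T \<ge> 2" using BT(5) by linarith
    have fw1: "fw a (\<mu> B) = 1"
    proof -
      have "w T \<noteq> 0"
      proof
        assume "w T = 0"
        then have "d B \<le> 0" using BT(4) fw_bounds(1)[of a "\<mu> B"] by simp
        moreover have "p * e B > 0" using ppos eB by simp
        ultimately show False using B(2) by simp
      qed
      then show ?thesis using wfT[OF BT(2) c2] BT(3) by simp
    qed
    have finT: "finite T" using Tfacts[OF BT(2)] by blast
    have "(w T - 1) / (real (card T) - 1) > p"
      using B(2) BT(4,5) fw1 eB by (simp add: pos_less_divide_eq mult.commute)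
    then show "\<exists>T\<subseteq>P0. card T \<ge> 2 \<and> conn_set E V (\<Union>T) \<and>
              (real (card {B\<in>T. \<mu> B > \<mu> Sstar}) + 0.5 * real (card {B\<in>T. \<mu> B = \<mu> Sstar}) - 1)
                / (real (card T) - 1) > p"
      using form[OF finT] BT(1,2,3) c2 by auto
  next
    assume "\<exists>T\<subseteq>P0. card T \<ge> 2 \<and> conn_set E V (\<Union>T) \<and>
              (real (card {B\<in>T. \<mu> B > \<mu> Sstar}) + 0.5 * real (card {B\<in>T. \<mu> B = \<mu> Sstar}) - 1)
                / (real (card T) - 1) > p"
    then obtain T where T: "T \<subseteq> P0" "card T \<ge> 2" "conn_set E V (\<Union>T)"
      "(real (card {B\<in>T. \<mu> B > \<mu> Sstar}) + 0.5 * real (card {B\<in>T. \<mu> B = \<mu> Sstar}) - 1)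
                / (real (card T) - 1) > p" by blast
    have finT: "finite T" using Tfacts[OF T(1)] by blast
    have "(w T - 1) / (real (card T) - 1) > p" using T(4)[unfolded form[OF finT]] .
    then have gt: "w T - 1 > p * (real (card T) - 1)" using cardT[OF T(2)] by (simp add: pos_less_divide_eq mult.commute)
    have fw1: "fw a (\<mu> (\<Union>T)) = 1"
    proof -
      have "w T \<noteq> 0"
      proof
        assume "w T = 0"
        moreover have "p * (real (card T) - 1) > 0" using ppos cardT[OF T(2)] by simp
        ultimately show False using gt by simp
      qed
      then show ?thesis using wfT[OF T(1,2)] by simp
    qed
    note M = merge[OF T(1-3)]
    have den: "real (card P0) - real (card T) + 2 > 0" using leP0[OF T(1)] by simp
    have "p * (real (card P0) + 1) - w T + fw a (\<mu> (\<Union>T)) < p * (real (card P0) - real (card T) + 2)"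
      using gt fw1 by (simp add: algebra_simps)
    then have "percentile \<mu> Sstar (insert (\<Union>T) (P0 - T)) < p"
      using M den by (simp add: divide_less_eq)
    then show "\<exists>Q. coarser E V Sstar Q P0 \<and> percentile \<mu> Sstar Q < p" using M by blast
  next
    assume "\<exists>Q. coarser E V Sstar Q P0 \<and> percentile \<mu> Sstar Q > p"
    then obtain Q where Q: "coarser E V Sstar Q P0" "percentile \<mu> Sstar Q > p" by blast
    obtain d e where DE: "finite Q" "w Q + 1/2 = p * (real (card P0) + 1) - (\<Sum>B\<in>Q. d B)"
      "real (card Q) + 1 = real (card P0) + 1 - (\<Sum>B\<in>Q. e B)"
      "\<forall>B\<in>Q. conn_set E V B \<and> {A\<in>P0. A \<subseteq> B} \<subseteq> P0 \<and> \<Union>{A\<in>P0. A \<subseteq> B} = B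
           \<and> d B = w {A\<in>P0. A \<subseteq> B} - fw a (\<mu> B)
           \<and> e B = real (card {A\<in>P0. A \<subseteq> B}) - 1
           \<and> e B \<ge> 0 \<and> (e B = 0 \<longrightarrow> d B = 0)"
      using decQ[OF Q(1)] by blast
    have pos: "real (card P0) + 1 - (\<Sum>B\<in>Q. e B) > 0" using DE(3) by linarith
    have pq: "percentile \<mu> Sstar Q = (p * (real (card P0) + 1) - (\<Sum>B\<in>Q. d B)) / (real (card P0) + 1 - (\<Sum>B\<in>Q. e B))"
      using percQ[OF DE(1)] DE(2,3) by simp
    have "\<exists>B\<in>Q. d B < p * e B"
    proof (rule ccontr)
      assume "\<not> ?thesis"
      then have "\<forall>B\<in>Q. d B \<ge> p * e B" by (auto simp: not_less)
      then have "(\<Sum>B\<in>Q. d B) \<ge> p * (\<Sum>B\<in>Q. e B)" by (rule ineq2)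
      then have "p * (real (card P0) + 1 - (\<Sum>B\<in>Q. e B)) \<ge> p * (real (card P0) + 1) - (\<Sum>B\<in>Q. d B)"
        by (simp add: algebra_simps)
      then have "p \<ge> percentile \<mu> Sstar Q" using pq pos by (simp add: divide_le_eq)
      with Q(2) show False by simp
    qed
    then obtain B where B: "B \<in> Q" "d B < p * e B" by blast
    define T where "T = {A\<in>P0. A \<subseteq> B}"
    have BT: "conn_set E V B" "T \<subseteq> P0" "B = \<Union>T" "d B = w T - fw a (\<mu> B)"
      "e B = real (card T) - 1" "e B \<ge> 0" "e B = 0 \<longrightarrow> d B = 0"
      using DE(4) B(1) unfolding T_def by blast+
    have "e B \<noteq> 0" using BT(7) B(2) by auto
    then have eB: "e B > 0" using BT(6) by simp
    then have c2: "card T \<ge> 2" using BT(5) by linarith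
    have finT: "finite T" using Tfacts[OF BT(2)] by blast
    have "w T - 1 < p * e B" using B(2) BT(4) fw_bounds(2)[of a "\<mu> B"] by simp
    then have "(w T - 1) / (real (card T) - 1) < p"
      using BT(5) eB by (simp add: pos_divide_less_eq mult.commute)
    then show "\<exists>T\<subseteq>P0. card T \<ge> 2 \<and> conn_set E V (\<Union>T) \<and>
              (real (card {B\<in>T. \<mu> B > \<mu> Sstar}) + 0.5 * real (card {B\<in>T. \<mu> B = \<mu> Sstar}) - 1)
                / (real (card T) - 1) < p"
      using form[OF finT] BT(1,2,3) c2 by auto
  next
    assume "\<exists>T\<subseteq>P0. card T \<ge> 2 \<and> conn_set E V (\<Union>T) \<and>
              (real (card {B\<in>T. \<mu> B > \<mu> Sstar}) + 0.5 * real (card {B\<in>T. \<mu> B = \<mu> Sstar}) - 1)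
                / (real (card T) - 1) < p"
    then obtain T where T: "T \<subseteq> P0" "card T \<ge> 2" "conn_set E V (\<Union>T)"
      "(real (card {B\<in>T. \<mu> B > \<mu> Sstar}) + 0.5 * real (card {B\<in>T. \<mu> B = \<mu> Sstar}) - 1)
                / (real (card T) - 1) < p" by blast
    have finT: "finite T" using Tfacts[OF T(1)] by blast
    have "(w T - 1) / (real (card T) - 1) < p" using T(4)[unfolded form[OF finT]] .
    then have lt: "w T - 1 < p * (real (card T) - 1)" using cardT[OF T(2)] by (simp add: pos_divide_less_eq mult.commute)
    have key: "w T - fw a (\<mu> (\<Union>T)) < p * (real (card T) - 1)"
    proof (cases "w T = 0")
      case True
      moreover have "p * (real (card T) - 1) > 0" using ppos cardT[OF T(2)] by simp
      ultimately show ?thesis using fw_bounds(1)[of a "\<mu> (\<Union>T)"] by simp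
    next
      case False
      then show ?thesis using wfT[OF T(1,2)] lt by simp
    qed
    note M = merge[OF T(1-3)]
    have den: "real (card P0) - real (card T) + 2 > 0" using leP0[OF T(1)] by simp
    have "p * (real (card P0) + 1) - w T + fw a (\<mu> (\<Union>T)) > p * (real (card P0) - real (card T) + 2)"
      using key by (simp add: algebra_simps)
    then have "percentile \<mu> Sstar (insert (\<Union>T) (P0 - T)) > p"
      using M den by (simp add: less_divide_eq)
    then show "\<exists>Q. coarser E V Sstar Q P0 \<and> percentile \<mu> Sstar Q > p" using M by blast
  qed
qed

end
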